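(* Let $\kappa > 1$ and let $x_1 = \dfrac{\sqrt{2}}{\sqrt{(\kappa-1)(\pi(\kappa-1)+2)}}$. Then for every $x \geq x_1$, \[ \kappa x\, R(x) \geq 1. \]
   Context: $Q$ denotes the Gaussian $Q$-function, $Q(x) = \frac{1}{\sqrt{2\pi}}\int_x^\infty e^{-t^2/2}\,dt$, and for $x \geq 0$, $R(x) = \sqrt{2\pi}\, Q(x)\, e^{x^2/2}$ (the Mills' ratio). *)

theory Defs
  imports "HOL-Analysis.Analysis"
begin

definition gaussQ :: "real \<Rightarrow> real" where
  "gaussQ x = (1 / sqrt (2 * pi)) * integral {x..} (\<lambda>t. exp (- (t^2) / 2))"

definition millsR :: "real \<Rightarrow> real" where
  "millsR x = sqrt (2 * pi) * gaussQ x * exp (x^2 / 2)"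

end

theory Submission imports Defs "HOL-Probability.Probability" "HOL-Real_Asymp.Real_Asymp" begin

definition phi :: "real \<Rightarrow> real" where "phi t = exp (- (t^2) / 2)"

lemma phi_eq: "phi x = sqrt (2*pi) * normal_density 0 1 x"
  unfolding phi_def normal_density_def by (simp add: field_simps)

lemma phi_integrable: "integrable lborel phi"
  unfolding phi_eq by (intro integrable_mult_right) simp

lemma phi_total: "integral\<^sup>L lborel phi = sqrt (2*pi)"
  unfolding phi_eq by simp

lemma phi_set_integrable: "A \<in> sets borel \<Longrightarrow> set_integrable lborel A phi"
  unfolding set_integrable_def
  by (intro integrable_mult_indicator phi_integrable) simp

lemma phi_HK: "A \<in> sets borel \<Longrightarrow> phi integrable_on A \<and> integral A phi = (LBINT x:A. phi x)"
  using set_borel_integral_eq_integral[OF phi_set_integrable] by simp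

lemma phi_hasint: "A \<in> sets borel \<Longrightarrow> (phi has_integral integral A phi) A"
  using phi_HK integrable_integral by blast

lemma phi_UNIV: "integral UNIV phi = sqrt (2*pi)"
proof -
  have "integral UNIV phi = (LBINT x:UNIV. phi x)" using phi_HK[of UNIV] by simp
  also have "\<dots> = sqrt(2*pi)" unfolding set_lebesgue_integral_def using phi_total by simp
  finally show ?thesis .
qed

lemma phi_split: "integral {..y} phi + integral {y..} phi = sqrt (2*pi)"
proof -
  have "(phi has_integral (integral {..y} phi + integral {y..} phi)) ({..y} \<union> {y..})"
  proof (rule has_integral_Un)
    show "(phi has_integral integral {..y} phi) {..y}" by (rule phi_hasint) simp
    show "(phi has_integral integral {y..} phi) {y..}" by (rule phi_hasint) simp
    have "{..y} \<inter> {y..} = {y}" by auto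
    then show "negligible ({..y} \<inter> {y..})" by simp
  qed
  moreover have "{..y} \<union> {y..} = (UNIV::real set)" by auto
  ultimately show ?thesis using phi_UNIV integral_unique by metis
qed

lemma phi_left_lim: "((\<lambda>y. integral {..y} phi) \<longlongrightarrow> sqrt (2*pi)) at_top"
proof -
  have "((\<lambda>y. \<integral> x. indicator {.. y} x *\<^sub>R phi x \<partial>lborel) \<longlongrightarrow> \<integral> x. phi x \<partial>lborel) at_top"
    by (rule tendsto_integral_at_top) (auto intro: phi_integrable)
  moreover have "(\<integral> x. indicator {.. y} x *\<^sub>R phi x \<partial>lborel) = integral {..y} phi" for y
    using phi_HK[of "{..y}"] unfolding set_lebesgue_integral_def by simp
  ultimately show ?thesis using phi_total by simp
qed

definition I :: "real \<Rightarrow> real" where "I y = integral {y..} phi"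

lemma I_lim: "(I \<longlongrightarrow> 0) at_top"
proof -
  have "I = (\<lambda>y. sqrt (2*pi) - integral {..y} phi)" using phi_split unfolding I_def by (auto simp: algebra_simps)
  moreover have "((\<lambda>y. sqrt (2*pi) - integral {..y} phi) \<longlongrightarrow> sqrt (2*pi) - sqrt(2*pi)) at_top"
    by (intro tendsto_intros phi_left_lim)
  ultimately show ?thesis by simp
qed

lemma I0: "I 0 = sqrt (2*pi) / 2"
proof -
  have "integral {..0} phi = (LBINT x:{..0}. phi x)" using phi_HK by simp
  also have "\<dots> = (LBINT x:{x. -x \<in> {..0}}. phi (-x))" by (rule set_integral_reflect)
  also have "\<dots> = (LBINT x:{0..}. phi x)" proof -
    have "{x::real. -x \<in> {..0}} = {0..}" by auto
    moreover have "(\<lambda>x. phi (-x)) = phi" by (auto simp: phi_def fun_eq_iff)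
    ultimately show ?thesis by simp
  qed
  also have "\<dots> = I 0" unfolding I_def using phi_HK by simp
  finally show ?thesis using phi_split[of 0] unfolding I_def by simp
qed

lemma I_deriv: "(I has_real_derivative - phi x) (at x)"
proof -
  let ?a = "x - 1" and ?b = "x + 1"
  have cont: "continuous_on {?a..?b} phi" unfolding phi_def by (intro continuous_intros) auto
  have "((\<lambda>y. integral {y..?b} phi) has_real_derivative - phi x) (at x within {?a..?b})"
    by (rule integral_has_real_derivative'[OF cont]) auto
  then have d: "((\<lambda>y. integral {y..?b} phi + I ?b) has_real_derivative - phi x) (at x)"
    using at_within_Icc_at[of ?a x ?b] by (auto intro!: derivative_eq_intros)
  show ?thesis
  proof (rule has_field_derivative_transform_within_open[OF d, of "{?a<..<?b}"])
    fix y assume y: "y \<in> {?a<..<?b}"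
    have "(phi has_integral (integral {y..?b} phi + I ?b)) ({y..?b} \<union> {?b..})"
    proof (rule has_integral_Un)
      show "(phi has_integral integral {y..?b} phi) {y..?b}" by (rule phi_hasint) simp
      show "(phi has_integral I ?b) {?b..}" unfolding I_def by (rule phi_hasint) simp
      have "{y..?b} \<inter> {?b..} = {?b}" using y by auto
      then show "negligible ({y..?b} \<inter> {?b..})" by simp
    qed
    moreover have "{y..?b} \<union> {?b..} = {y..}" using y by auto
    ultimately show "integral {y..?b} phi + I ?b = I y" unfolding I_def using integral_unique by metis
  qed auto
qed

lemma alg:
  fixes x s p d :: real
  assumes s2: "s^2 = x^2 + 2*p" and s: "s > 0" and x: "x \<ge> 0" and d: "d = (p-1)*x+s" "d > 0"
  shows "x * (p / d) + p*((p-1) + x/s)/d^2 - 1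
         = 2*p^2*((p-3)* s - x) / ((s+x)^2 * d^2 * s)"
proof -
  have e: "s + x \<noteq> 0" using s x by simp
  have "d \<noteq> 0" "s \<noteq> 0" using d s by auto
  then show ?thesis using e
    apply (simp add: field_simps)
    using s2 d(1) by algebra
qed

definition sr :: "real \<Rightarrow> real" where "sr x = sqrt (x^2 + 2*pi)"
definition den :: "real \<Rightarrow> real" where "den x = (pi-1)*x + sr x"
definition g :: "real \<Rightarrow> real" where "g x = pi / den x"
definition G :: "real \<Rightarrow> real" where "G x = g x * phi x"
definition c :: "real \<Rightarrow> real" where
  "c x = 2*pi^2*((pi-3) * sr x - x) / ((sr x + x)^2 * den x^2 * sr x)"

lemma sr_pos: "sr x > 0" unfolding sr_def by (simp add: add_nonneg_pos)
lemma sr_sq: "sr x ^ 2 = x^2 + 2*pi" unfolding sr_def by (simp add: add_nonneg_pos)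
lemma den_pos: "x \<ge> 0 \<Longrightarrow> den x > 0"
  unfolding den_def using sr_pos[of x] pi_gt3 by (simp add: add_nonneg_pos)

lemma sr_deriv: "(sr has_real_derivative x / sr x) (at x)"
proof -
  have "x^2 + 2*pi > 0" by (simp add: add_nonneg_pos)
  then show ?thesis unfolding sr_def
    by (auto intro!: derivative_eq_intros simp: field_simps)
qed

lemma phi_deriv: "(phi has_real_derivative (- x * phi x)) (at x)"
  unfolding phi_def by (auto intro!: derivative_eq_intros)

lemma G_deriv:
  assumes x: "x \<ge> 0"
  shows "(G has_real_derivative (- phi x - phi x * c x)) (at x)"
proof -
  have dp: "den x > 0" using den_pos[OF x] .
  have dd: "(den has_real_derivative (pi - 1) + x / sr x) (at x)"
    unfolding den_def[abs_def] by (auto intro!: derivative_eq_intros sr_deriv)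
  have dg: "(g has_real_derivative - (pi * ((pi-1) + x / sr x)) / den x ^ 2) (at x)"
    unfolding g_def[abs_def] using dp
    by (auto intro!: derivative_eq_intros dd simp: power2_eq_square)
  have "(G has_real_derivative (- (pi * ((pi-1) + x / sr x)) / den x ^ 2) * phi x + g x * (- x * phi x)) (at x)"
    unfolding G_def[abs_def] by (auto intro!: derivative_eq_intros dg phi_deriv)
  moreover have "(- (pi * ((pi-1) + x / sr x)) / den x ^ 2) * phi x + g x * (- x * phi x)
      = - phi x - phi x * c x"
  proof -
    have h: "x * (pi / den x) + pi*((pi-1) + x/sr x)/den x^2 - 1 = c x"
      unfolding c_def by (rule alg[OF sr_sq sr_pos x den_def dp])
    show ?thesis unfolding g_def h[symmetric] using dp by (simp add: field_simps)
  qed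
  ultimately show ?thesis by simp
qed

definition J :: "real \<Rightarrow> real" where "J x = I x - G x"
definition k :: "real \<Rightarrow> real" where "k x = (pi-3) * sr x - x"

lemma J_deriv: "x \<ge> 0 \<Longrightarrow> (J has_real_derivative phi x * c x) (at x)"
  unfolding J_def[abs_def] using I_deriv[of x] G_deriv[of x]
  by (auto intro!: derivative_eq_intros)

lemma c_sign:
  assumes "x \<ge> 0"
  shows "k x \<ge> 0 \<Longrightarrow> c x \<ge> 0" "k x \<le> 0 \<Longrightarrow> c x \<le> 0"
proof -
  have pos: "(sr x + x)^2 * den x^2 * sr x > 0" using sr_pos[of x] den_pos[OF assms] assms
    by (simp add: add_pos_nonneg)
  show "k x \<ge> 0 \<Longrightarrow> c x \<ge> 0" unfolding c_def k_def using pos by simp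
  show "k x \<le> 0 \<Longrightarrow> c x \<le> 0" unfolding c_def k_def using pos
    by (intro divide_nonpos_pos mult_nonneg_nonpos) auto
qed

lemma k_anti:
  assumes "0 \<le> y" "y \<le> x"
  shows "k x \<le> k y"
proof -
  have e: "(sr x - sr y) * (sr x + sr y) = (x - y) * (x + y)"
    using sr_sq[of x] sr_sq[of y] by (simp add: algebra_simps power2_eq_square)
  have sx: "sr x \<ge> x" unfolding sr_def using assms by (simp add: real_le_rsqrt)
  have sy: "sr y \<ge> y" unfolding sr_def using assms by (simp add: real_le_rsqrt)
  have mono: "sr y \<le> sr x" unfolding sr_def using assms by (simp add: power_mono)
  have p: "sr x + sr y > 0" using sr_pos[of x] sr_pos[of y] by simp
  have "sr x - sr y \<le> x - y"
  proof -
    have "(sr x - sr y) * (sr x + sr y) \<le> (x - y) * (sr x + sr y)"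
      unfolding e using assms sx sy by (intro mult_left_mono) auto
    then show ?thesis using p by simp
  qed
  moreover have "pi - 3 < 1" using pi_less_4 by simp
  moreover have "pi - 3 > 0" using pi_gt3 by simp
  ultimately have "(pi - 3) * (sr x - sr y) \<le> x - y"
    using mono assms
    by (smt (verit) mult_left_le_one_le mult_right_mono)
  then show ?thesis unfolding k_def by (simp add: algebra_simps)
qed

lemma J0: "J 0 = 0"
proof -
  have "sqrt (2*pi) * sqrt (2*pi) = 2*pi" by simp
  then have "sqrt (2*pi) / 2 = pi / sqrt (2*pi)" by (simp add: field_simps)
  then show ?thesis
    unfolding J_def G_def g_def den_def sr_def I0 phi_def by simp
qed

lemma phi_lim: "(phi \<longlongrightarrow> 0) at_top"
proof -
  have "((\<lambda>x::real. exp (- (x^2) / 2)) \<longlongrightarrow> 0) at_top" by real_asymp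
  moreover have "phi = (\<lambda>x::real. exp (- (x^2) / 2))" by (rule ext) (simp add: phi_def)
  ultimately show ?thesis by simp
qed

lemma G_lim: "(G \<longlongrightarrow> 0) at_top"
proof (rule tendsto_sandwich[of "\<lambda>_. 0" _ _ "\<lambda>x. (pi / sqrt (2*pi)) * phi x"])
  have "0 \<le> G x \<and> G x \<le> (pi / sqrt (2*pi)) * phi x" if "x \<ge> 0" for x
  proof -
    have d: "den x > 0" using den_pos that .
    have "sqrt (2*pi) \<le> sr x" unfolding sr_def by simp
    also have "sr x \<le> den x" unfolding den_def using that pi_gt3 by simp
    finally have "pi / den x \<le> pi / sqrt (2*pi)" using d by (intro divide_left_mono) auto
    moreover have "phi x > 0" unfolding phi_def by simp
    ultimately have "pi / den x * phi x \<le> pi / sqrt (2*pi) * phi x" by (intro mult_right_mono) auto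
    moreover have "0 \<le> pi / den x * phi x" using d \<open>phi x > 0\<close> by simp
    ultimately show ?thesis unfolding G_def g_def by simp
  qed
  then show "eventually (\<lambda>x. 0 \<le> G x) at_top" "eventually (\<lambda>x. G x \<le> (pi / sqrt (2*pi)) * phi x) at_top"
    by (auto simp: eventually_at_top_linorder)
  show "((\<lambda>x. 0::real) \<longlongrightarrow> 0) at_top" by simp
  show "((\<lambda>x. pi / sqrt (2 * pi) * phi x) \<longlongrightarrow> 0) at_top"
    using tendsto_mult[OF tendsto_const phi_lim, of "pi / sqrt (2*pi)"] by simp
qed

lemma J_nonneg:
  assumes x: "x \<ge> 0"
  shows "J x \<ge> 0"
proof (cases "k x \<ge> 0")
  case True
  have "J 0 \<le> J x"
  proof (rule DERIV_nonneg_imp_nondecreasing[OF x])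
    fix y assume y: "0 \<le> y" "y \<le> x"
    have "k y \<ge> 0" using k_anti[OF y] True by simp
    then have "c y \<ge> 0" using c_sign(1)[OF y(1)] by simp
    moreover have "phi y > 0" unfolding phi_def by simp
    ultimately show "\<exists>d. (J has_real_derivative d) (at y) \<and> d \<ge> 0"
      using J_deriv[OF y(1)] by auto
  qed
  then show ?thesis using J0 by simp
next
  case False
  have le: "J y \<le> J x" if y: "y \<ge> x" for y
  proof (rule DERIV_nonpos_imp_nonincreasing[OF y])
    fix z assume z: "x \<le> z" "z \<le> y"
    have "k z \<le> 0" using k_anti[OF x z(1)] False by simp
    then have "c z \<le> 0" using c_sign(2)[of z] x z by simp
    moreover have "phi z > 0" unfolding phi_def by simp
    ultimately show "\<exists>d. (J has_real_derivative d) (at z) \<and> d \<le> 0"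
      using J_deriv[of z] x z by (auto intro!: mult_nonneg_nonpos)
  qed
  have lim: "(J \<longlongrightarrow> 0) at_top"
  proof -
    have "((\<lambda>x. I x - G x) \<longlongrightarrow> 0 - 0) at_top" by (intro tendsto_intros I_lim G_lim)
    then show ?thesis unfolding J_def[abs_def] by simp
  qed
  show ?thesis
    by (rule tendsto_upperbound[OF lim]) (use le in \<open>auto simp: eventually_at_top_linorder\<close>)
qed

lemma mills_ge_g:
  assumes "x \<ge> 0"
  shows "millsR x \<ge> g x"
proof -
  have ph: "phi = (\<lambda>t::real. exp (- (t^2) / 2))" by (rule ext) (simp add: phi_def)
  have m: "millsR x = I x * exp (x^2/2)"
    unfolding millsR_def gaussQ_def I_def ph by simp
  have "g x * phi x \<le> I x" using J_nonneg[OF assms] unfolding J_def G_def by simp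
  then have "g x * phi x * exp (x^2/2) \<le> I x * exp (x^2/2)" by (simp add: mult_right_mono)
  moreover have "phi x * exp (x^2/2) = 1" unfolding phi_def by (simp add: exp_add[symmetric])
  ultimately show ?thesis unfolding m by (simp add: mult.assoc)
qed

theorem lemma2:
  fixes \<kappa> x :: real
  assumes "\<kappa> > 1"
    and "x \<ge> sqrt 2 / sqrt ((\<kappa> - 1) * (pi * (\<kappa> - 1) + 2))"
  shows "\<kappa> * x * millsR x \<ge> 1"
proof -
  define t where "t = \<kappa> - 1"
  have t: "t > 0" using assms(1) t_def by simp
  define D where "D = t * (pi * t + 2)"
  have D: "D > 0" unfolding D_def using t by (simp add: add_pos_pos)
  have x1: "x \<ge> sqrt 2 / sqrt D" using assms(2) unfolding D_def t_def by simp
  have x1p: "sqrt 2 / sqrt D > 0" using D by simp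
  then have xp: "x > 0" using x1 by simp
  have "(sqrt 2 / sqrt D)^2 \<le> x^2" using x1 x1p by (intro power_mono) auto
  moreover have "(sqrt 2 / sqrt D)^2 = 2 / D" using D by (simp add: power_divide)
  ultimately have "2 / D \<le> x^2" by simp
  then have x2: "2 \<le> x^2 * D" using D by (simp add: field_simps)
  have "x^2 + 2*pi \<le> ((pi*t + 1) * x)^2"
  proof -
    have "((pi*t + 1) * x)^2 = x^2 + pi * (x^2 * D)" unfolding D_def by (simp add: algebra_simps power2_eq_square)
    also have "\<dots> \<ge> x^2 + pi * 2" using x2 pi_gt3 by simp
    finally show ?thesis by simp
  qed
  then have "sr x \<le> (pi*t + 1) * x" unfolding sr_def using xp t
    by (intro real_le_lsqrt) (auto intro: add_nonneg_nonneg)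
  then have "den x \<le> \<kappa> * pi * x" unfolding den_def t_def by (simp add: algebra_simps)
  then have "1 \<le> \<kappa> * x * g x" unfolding g_def using den_pos[of x] xp by (simp add: field_simps)
  also have "\<dots> \<le> \<kappa> * x * millsR x"
    using mills_ge_g[of x] xp assms(1) by (intro mult_left_mono) auto
  finally show ?thesis .
qed

end
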